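(* Let $d_1,\dots,d_m$ be positive integers with $\sum_{j=1}^m d_j=n$ and let $B=\sum_{j=1}^m d_j\log_2(n/d_j)$. Fix $i$ and let $d_i'=d_i+1$, $d_j'=d_j$ for $j\ne i$, $n'=n+1$, and $B'=\sum_{j=1}^m d_j'\log_2(n'/d_j')$. Then there is an absolute constant $c>0$ (independent of $n,m,d_1,\dots,d_m,i$) such that $$(B'+n')-(B+n)\ \ge\ c\cdot\log(n/d_i).$$
   Context: $\log_2$ denotes the binary logarithm and $\log(x):=\max(\log_2 x,1)$. This models inserting one element into gap $\Delta_i$ of a partition of $n$ elements into gaps of sizes $d_j=|\Delta_j|$. *)

theory Defs
  imports Complex_Main
begin

text \<open>Truncated binary logarithm: log(x) = max(log_2 x, 1).\<close>
definition lg :: "real \<Rightarrow> real" where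
  "lg x = max (log 2 x) 1"

definition Bsum :: "nat \<Rightarrow> (nat \<Rightarrow> nat) \<Rightarrow> nat \<Rightarrow> real" where
  "Bsum m d n = (\<Sum>j=1..m. real (d j) * log 2 (real n / real (d j)))"

end

theory Submission
  imports Defs
begin

lemma bern: "0 \<le> (x::real) \<Longrightarrow> 1 + real k * x \<le> (1 + x) ^ k"
proof (induction k)
  case 0 then show ?case by simp
next
  case (Suc k)
  have "1 + real (Suc k) * x \<le> (1 + real k * x) * (1 + x)"
    using Suc.prems by (simp add: algebra_simps)
  also have "\<dots> \<le> (1 + x) ^ k * (1 + x)"
    using Suc by (intro mult_right_mono) auto
  finally show ?case by (simp add: mult.commute)
qed

lemma ln2_ge: "ln (2::real) \<ge> 7/12"
proof -
  have a: "ln (3/4::real) \<le> -1/4" using ln_le_minus_one[of "3/4::real"] by simp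
  have b: "ln (2/3::real) \<le> -1/3" using ln_le_minus_one[of "2/3::real"] by simp
  have "ln (3/4::real) + ln (2/3) = ln ((3/4) * (2/3))" using ln_mult[of "3/4::real" "2/3"] by simp
  also have "\<dots> = - ln 2" by (simp add: ln_div)
  finally show ?thesis using a b by linarith
qed

lemma h1:
  fixes n :: nat assumes "1 \<le> n"
  shows "real n * (log 2 (real n + 1) - log 2 (real n)) \<ge> 1"
proof -
  have np: "real n > 0" using assms by simp
  have "2 \<le> (1 + 1 / real n) ^ n" using bern[of "1 / real n" n] np by simp
  hence "ln 2 \<le> ln ((1 + 1 / real n) ^ n)" by (subst ln_le_cancel_iff) auto
  also have "\<dots> = real n * ln (1 + 1 / real n)" using np by (simp add: ln_realpow)
  also have "ln (1 + 1 / real n) = ln (real n + 1) - ln (real n)"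
  proof -
    have "1 + 1 / real n = (real n + 1) / real n" using np by (simp add: field_simps)
    hence "ln (1 + 1 / real n) = ln ((real n + 1) / real n)" by simp
    also have "\<dots> = ln (real n + 1) - ln (real n)" using np by (intro ln_divide_pos) auto
    finally show ?thesis .
  qed
  finally have "ln 2 \<le> real n * (ln (real n + 1) - ln (real n))" .
  moreover have "log 2 (real n + 1) - log 2 (real n) = (ln (real n + 1) - ln (real n)) / ln 2"
    by (simp add: log_def diff_divide_distrib)
  ultimately have "real n * (log 2 (real n + 1) - log 2 (real n)) \<ge> ln 2 / ln 2"
    by (simp add: divide_right_mono)
  thus ?thesis by simp
qed

lemma h2:
  fixes D :: nat assumes "1 \<le> D"
  shows "real D * (log 2 (real D + 1) - log 2 (real D)) \<le> 12/7"
proof -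
  have np: "real D > 0" using assms by simp
  have "ln (1 + 1 / real D) \<le> 1 / real D" by (rule ln_add_one_self_le_self) simp
  moreover have "ln (1 + 1 / real D) = ln (real D + 1) - ln (real D)"
  proof -
    have "1 + 1 / real D = (real D + 1) / real D" using np by (simp add: field_simps)
    hence "ln (1 + 1 / real D) = ln ((real D + 1) / real D)" by simp
    also have "\<dots> = ln (real D + 1) - ln (real D)" using np by (intro ln_divide_pos) auto
    finally show ?thesis .
  qed
  ultimately have "real D * (ln (real D + 1) - ln (real D)) \<le> real D * (1 / real D)"
    using np by (metis less_eq_real_def mult_left_mono)
  hence "real D * (ln (real D + 1) - ln (real D)) \<le> 1" using np by simp
  moreover have "log 2 (real D + 1) - log 2 (real D) = (ln (real D + 1) - ln (real D)) / ln 2"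
    by (simp add: log_def diff_divide_distrib)
  moreover have "ln (2::real) > 0" by simp
  ultimately have "real D * (log 2 (real D + 1) - log 2 (real D)) \<le> 1 / ln 2"
    by (simp add: divide_right_mono)
  also have "\<dots> \<le> 12/7" using ln2_ge by (simp add: field_simps)
  finally show ?thesis .
qed

lemma h3:
  fixes n D :: nat assumes "1 \<le> D" "D \<le> n"
  shows "log 2 (real n + 1) - log 2 (real D + 1) \<ge> 0"
    and "log 2 (real n + 1) - log 2 (real D + 1) \<ge> log 2 (real n / real D) - 1"
proof -
  show "log 2 (real n + 1) - log 2 (real D + 1) \<ge> 0" using assms by simp
  have np: "real D > 0" "real n > 0" using assms by auto
  have "real n / (2 * real D) \<le> (real n + 1) / (real D + 1)"
  proof -
    have h: "1 * real n \<le> real D * real n" using assms by (intro mult_right_mono) auto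
    have "real n * (real D + 1) = real D * real n + real n" by (simp add: algebra_simps)
    also have "\<dots> \<le> real D * real n + real D * real n" using h by simp
    also have "\<dots> \<le> (real n + 1) * (2 * real D)" using np by (simp add: algebra_simps)
    finally have "real n * (real D + 1) \<le> (real n + 1) * (2 * real D)" .
    thus ?thesis using np by (simp add: divide_simps)
  qed
  hence "log 2 (real n / (2 * real D)) \<le> log 2 ((real n + 1) / (real D + 1))"
    using np by (subst log_le_cancel_iff) auto
  moreover have "log 2 (real n / (2 * real D)) = log 2 (real n / real D) - 1"
    using np by (simp add: log_divide log_mult)
  moreover have "log 2 ((real n + 1) / (real D + 1)) = log 2 (real n + 1) - log 2 (real D + 1)"
    using np by (simp add: log_divide)
  ultimately show "log 2 (real n + 1) - log 2 (real D + 1) \<ge> log 2 (real n / real D) - 1"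
    by simp
qed

lemma key:
  fixes n D :: nat assumes "1 \<le> D" "D \<le> n"
  shows "1 + ((real n + 1) * log 2 (real n + 1) - real n * log 2 (real n))
           - ((real D + 1) * log 2 (real D + 1) - real D * log 2 (real D))
         \<ge> 1/4 * lg (real n / real D)"
proof -
  have a: "real n * (log 2 (real n + 1) - log 2 (real n)) \<ge> 1" using h1 assms by simp
  have b: "real D * (log 2 (real D + 1) - log 2 (real D)) \<le> 12/7" using h2 assms by simp
  have c1: "log 2 (real n + 1) - log 2 (real D + 1) \<ge> 0"
   and c2: "log 2 (real n + 1) - log 2 (real D + 1) \<ge> log 2 (real n / real D) - 1"
    using h3 assms by auto
  have eq: "1 + ((real n + 1) * log 2 (real n + 1) - real n * log 2 (real n))
           - ((real D + 1) * log 2 (real D + 1) - real D * log 2 (real D))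
        = 1 + real n * (log 2 (real n + 1) - log 2 (real n))
            - real D * (log 2 (real D + 1) - log 2 (real D))
            + (log 2 (real n + 1) - log 2 (real D + 1))"
    by (simp add: algebra_simps)
  show ?thesis
  proof (cases "log 2 (real n / real D) \<le> 1")
    case True
    hence "lg (real n / real D) = 1" unfolding lg_def by simp
    then show ?thesis unfolding eq using a b c1 by linarith
  next
    case False
    hence "lg (real n / real D) = log 2 (real n / real D)" unfolding lg_def by simp
    then show ?thesis unfolding eq using a b c2 False by linarith
  qed
qed

lemma Bsum_alt:
  assumes "\<forall>j\<in>{1..m}. 0 < e j" "k > 0"
  shows "Bsum m e k = real (\<Sum>j=1..m. e j) * log 2 (real k)
           - (\<Sum>j=1..m. real (e j) * log 2 (real (e j)))"
proof -
  have "Bsum m e k = (\<Sum>j=1..m. real (e j) * log 2 (real k) - real (e j) * log 2 (real (e j)))"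
    unfolding Bsum_def using assms
    by (intro sum.cong) (auto simp: log_divide right_diff_distrib)
  also have "\<dots> = real (\<Sum>j=1..m. e j) * log 2 (real k)
           - (\<Sum>j=1..m. real (e j) * log 2 (real (e j)))"
    by (simp add: sum_subtractf sum_distrib_right)
  finally show ?thesis .
qed

theorem lemma5p1:
  shows "\<exists>c>0. \<forall>(m::nat) (n::nat) (d::nat \<Rightarrow> nat) (i::nat).
           (\<forall>j\<in>{1..m}. 0 < d j) \<and> (\<Sum>j=1..m. d j) = n \<and> i \<in> {1..m} \<longrightarrow>
           (Bsum m (d(i := d i + 1)) (n + 1) + real (n + 1)) - (Bsum m d n + real n)
             \<ge> c * lg (real n / real (d i))"
proof (intro exI[of _ "1/4"] conjI allI impI)
  fix m n :: nat and d :: "nat \<Rightarrow> nat" and i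
  assume H: "(\<forall>j\<in>{1..m}. 0 < d j) \<and> (\<Sum>j=1..m. d j) = n \<and> i \<in> {1..m}"
  hence pos: "\<forall>j\<in>{1..m}. 0 < d j" and sn: "(\<Sum>j=1..m. d j) = n" and im: "i \<in> {1..m}"
    by auto
  let ?d' = "d(i := d i + 1)"
  have pos': "\<forall>j\<in>{1..m}. 0 < ?d' j" using pos by auto
  have "0 < d i" using pos im by blast
  hence Di: "1 \<le> d i" by simp
  have Dn: "d i \<le> n" using sn sum.remove[OF finite_atLeastAtMost im, of d] by simp
  have sn': "(\<Sum>j=1..m. ?d' j) = n + 1"
  proof -
    have "(\<Sum>j=1..m. ?d' j) = ?d' i + (\<Sum>j\<in>{1..m}-{i}. ?d' j)"
      by (rule sum.remove[OF finite_atLeastAtMost im])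
    also have "(\<Sum>j\<in>{1..m}-{i}. ?d' j) = (\<Sum>j\<in>{1..m}-{i}. d j)"
      by (rule sum.cong) auto
    also have "n = d i + (\<Sum>j\<in>{1..m}-{i}. d j)"
      using sn sum.remove[OF finite_atLeastAtMost im, of d] by simp
    ultimately show ?thesis by simp
  qed
  define S where "S = (\<Sum>j\<in>{1..m} - {i}. real (d j) * log 2 (real (d j)))"
  have T: "(\<Sum>j=1..m. real (d j) * log 2 (real (d j))) = S + real (d i) * log 2 (real (d i))"
    unfolding S_def using sum.remove[OF finite_atLeastAtMost im, of "\<lambda>j. real (d j) * log 2 (real (d j))"]
    by simp
  have T': "(\<Sum>j=1..m. real (?d' j) * log 2 (real (?d' j)))
      = S + (real (d i) + 1) * log 2 (real (d i) + 1)"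
  proof -
    have "(\<Sum>j=1..m. real (?d' j) * log 2 (real (?d' j))) = real (?d' i) * log 2 (real (?d' i))
       + (\<Sum>j\<in>{1..m}-{i}. real (?d' j) * log 2 (real (?d' j)))"
      by (rule sum.remove[OF finite_atLeastAtMost im])
    also have "(\<Sum>j\<in>{1..m}-{i}. real (?d' j) * log 2 (real (?d' j))) = S"
      unfolding S_def by (rule sum.cong) auto
    finally show ?thesis by (simp add: add.commute)
  qed
  have B1: "Bsum m ?d' (n+1) = (real n + 1) * log 2 (real n + 1)
       - (S + (real (d i) + 1) * log 2 (real (d i) + 1))"
    using Bsum_alt[OF pos', of "n+1"] unfolding sn' T' by (simp add: fun_upd_def ac_simps)
  have B0: "Bsum m d n = real n * log 2 (real n) - (S + real (d i) * log 2 (real (d i)))"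
    using Bsum_alt[OF pos, of n] Di Dn unfolding sn T by simp
  show "(Bsum m ?d' (n + 1) + real (n + 1)) - (Bsum m d n + real n)
             \<ge> 1/4 * lg (real n / real (d i))"
  proof -
    have e: "(Bsum m ?d' (n + 1) + real (n + 1)) - (Bsum m d n + real n)
      = 1 + ((real n + 1) * log 2 (real n + 1) - real n * log 2 (real n))
           - ((real (d i) + 1) * log 2 (real (d i) + 1) - real (d i) * log 2 (real (d i)))"
      unfolding B1 B0 by (simp add: algebra_simps)
    show ?thesis unfolding e by (rule key[OF Di Dn])
  qed
qed simp

end
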